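(* The power series $\mathcal{E}_1(x)=\sum_{n=1}^{\infty}e(n)x^n$ is a $2$-regular power series, and it is transcendental over $\mathbb{Q}(x)$.
   Context: The Stern polynomials $B_n(t)\in\mathbb{Z}[t]$ are defined by $B_0(t)=0$, $B_1(t)=1$, and for $n\geq 1$: $B_{2n}(t)=tB_n(t)$, $B_{2n+1}(t)=B_n(t)+B_{n+1}(t)$. For $n\geq1$ let $e(n)=\deg B_n(t)$. A power series $\sum_n a_nx^n$ with coefficients in a field is $k$-regular (in the sense of Allouche–Shallit) if the $\mathbb{Q}$-vector space (over the relevant field) spanned by the subsequences $(a_{k^{j}n+r})_{n\ge0}$, $j\ge0$, $0\le r<k^j$, is finite-dimensional. *)

theory Defs
  imports "HOL-Computational_Algebra.Computational_Algebra"
begin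

function stern_poly :: "nat \<Rightarrow> int poly" where
  "stern_poly n =
     (if n = 0 then 0
      else if n = 1 then 1
      else if even n then [:0, 1:] * stern_poly (n div 2)
      else stern_poly (n div 2) + stern_poly (n div 2 + 1))"
  by auto
termination
  by (relation "measure id") (auto elim!: oddE)

declare stern_poly.simps [simp del]

definition stern_deg :: "nat \<Rightarrow> nat" where
  "stern_deg n = degree (stern_poly n)"

definition E1 :: "rat fps" where
  "E1 = Abs_fps (\<lambda>n. if n = 0 then 0 else of_nat (stern_deg n))"

definition k_kernel :: "nat \<Rightarrow> (nat \<Rightarrow> 'a) \<Rightarrow> (nat \<Rightarrow> 'a) set" where
  "k_kernel k a = {(\<lambda>n. a (k ^ j * n + r)) | j r. r < k ^ j}"

text \<open>k-regular (Allouche--Shallit): the span (over the coefficient field) of the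
  k-kernel is finite-dimensional, i.e. contained in the span of finitely many sequences.\<close>
definition k_regular :: "nat \<Rightarrow> (nat \<Rightarrow> 'a::field) \<Rightarrow> bool" where
  "k_regular k a \<longleftrightarrow>
     (\<exists>B :: (nat \<Rightarrow> 'a) set. finite B \<and>
        (\<forall>f \<in> k_kernel k a. \<exists>c :: (nat \<Rightarrow> 'a) \<Rightarrow> 'a. f = (\<lambda>n. \<Sum>b\<in>B. c b * b n)))"

definition k_regular_fps :: "nat \<Rightarrow> 'a::field fps \<Rightarrow> bool" where
  "k_regular_fps k f \<longleftrightarrow> k_regular k (fps_nth f)"

text \<open>Algebraic over Q(x): root of a nonzero polynomial with coefficients in Q(x);
  after clearing denominators, coefficients in Q[x].\<close>
definition fps_algebraic_ratfun :: "rat fps \<Rightarrow> bool" where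
  "fps_algebraic_ratfun f \<longleftrightarrow>
     (\<exists>P :: rat poly poly. P \<noteq> 0 \<and> poly (map_poly fps_of_poly P) f = 0)"

end

theory Submission
  imports Defs "HOL-Analysis.Analysis" "HOL-Real_Asymp.Real_Asymp"
begin


abbreviation "a \<equiv> stern_deg"

lemma sp0[simp]: "stern_poly 0 = 0" by (subst stern_poly.simps) simp
lemma sp1[simp]: "stern_poly (Suc 0) = 1" by (subst stern_poly.simps) simp
lemma sp_even: "n \<ge> 1 \<Longrightarrow> stern_poly (2*n) = [:0,1:] * stern_poly n"
  by (subst stern_poly.simps) auto
lemma sp_odd: "n \<ge> 1 \<Longrightarrow> stern_poly (2*n+1) = stern_poly n + stern_poly (n+1)"
  by (subst stern_poly.simps) auto

lemma lc_add_pos: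
  fixes p q :: "int poly"
  assumes "lead_coeff p > 0" "lead_coeff q > 0"
  shows "degree (p+q) = max (degree p) (degree q) \<and> lead_coeff (p+q) > 0"
proof (cases "degree p = degree q")
  case True
  have c: "coeff (p+q) (degree p) = lead_coeff p + lead_coeff q" using True by simp
  hence "coeff (p+q) (degree p) \<noteq> 0" using assms by simp
  hence "degree (p+q) \<ge> degree p" by (rule le_degree)
  moreover have "degree (p+q) \<le> degree p" using degree_add_le[of p "degree p" q] True by simp
  ultimately have "degree (p+q) = degree p" by simp
  with c assms True show ?thesis by simp
next
  case False
  show ?thesis
  proof (cases "degree p < degree q")
    case True
    hence "degree (p+q) = degree q" by (rule degree_add_eq_right)
    moreover have "coeff (p+q) (degree q) = lead_coeff q" using True by (simp add: coeff_eq_0)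
    ultimately show ?thesis using assms True by simp
  next
    case F2: False
    hence T: "degree q < degree p" using False by simp
    hence "degree (p+q) = degree p" by (rule degree_add_eq_left)
    moreover have "coeff (p+q) (degree p) = lead_coeff p" using T by (simp add: coeff_eq_0)
    ultimately show ?thesis using assms T by simp
  qed
qed

lemma sp_lc: "n \<ge> 1 \<Longrightarrow> lead_coeff (stern_poly n) > 0"
proof (induction n rule: less_induct)
  case (less n)
  show ?case
  proof (cases "n = 1")
    case True thus ?thesis by simp
  next
    case False
    show ?thesis
    proof (cases "even n")
      case True
      then obtain m where m: "n = 2*m" by blast
      with less.prems False have "m \<ge> 1" "m < n" by auto
      with less.IH have "lead_coeff (stern_poly m) > 0" by blast
      thus ?thesis using m \<open>m\<ge>1\<close> by (cases "stern_poly m = 0") (simp_all add: sp_even lead_coeff_mult)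
    next
      case odd: False
      then obtain m where m: "n = 2*m+1" using oddE by blast
      with less.prems False have "m \<ge> 1" "m < n" "m+1 < n" by auto
      with less.IH have "lead_coeff (stern_poly m) > 0" "lead_coeff (stern_poly (m+1)) > 0" by auto
      hence "lead_coeff (stern_poly m + stern_poly (m+1)) > 0" by (intro conjunct2[OF lc_add_pos])
      moreover have "stern_poly n = stern_poly m + stern_poly (m+1)" using sp_odd[OF \<open>m\<ge>1\<close>] m by simp
      ultimately show ?thesis by simp
    qed
  qed
qed

lemma sp_nz: "n \<ge> 1 \<Longrightarrow> stern_poly n \<noteq> 0"
  using sp_lc[of n] by auto

lemma a0[simp]: "a 0 = 0" by (simp add: stern_deg_def)
lemma a1[simp]: "a (Suc 0) = 0" by (simp add: stern_deg_def)

lemma a_even: "n \<ge> 1 \<Longrightarrow> a (2*n) = a n + 1"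
  unfolding stern_deg_def using sp_nz[of n]
  by (simp add: sp_even degree_mult_eq)

lemma a_odd: "n \<ge> 1 \<Longrightarrow> a (2*n+1) = max (a n) (a (n+1))"
  unfolding stern_deg_def using lc_add_pos[OF sp_lc[of n] sp_lc[of "n+1"]]
  by (subst sp_odd) auto

lemma a2[simp]: "a 2 = 1" using a_even[of 1] by simp
lemma a2'[simp]: "a (Suc (Suc 0)) = Suc 0" using a2 by (simp add: numeral_2_eq_2)

lemma a_step: "n \<ge> 1 \<Longrightarrow> a (n+1) \<le> a n + 1 \<and> a n \<le> a (n+1) + 1"
proof (induction n rule: less_induct)
  case (less n)
  show ?case
  proof (cases "n = 1")
    case True thus ?thesis by simp
  next
    case False
    show ?thesis
    proof (cases "even n")
      case True
      then obtain m where m: "n = 2*m" by blast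
      with less.prems False have "m \<ge> 1" "m < n" by auto
      with less.IH have ih: "a (m+1) \<le> a m + 1 \<and> a m \<le> a (m+1) + 1" by blast
      have "a n = a m + 1" "a (n+1) = max (a m) (a (m+1))"
        using m \<open>m\<ge>1\<close> a_even a_odd by auto
      thus ?thesis using ih by auto
    next
      case odd: False
      then obtain m where m: "n = 2*m+1" using oddE by blast
      with less.prems False have "m \<ge> 1" "m < n" by auto
      with less.IH have ih: "a (m+1) \<le> a m + 1 \<and> a m \<le> a (m+1) + 1" by blast
      have "a n = max (a m) (a (m+1))" "a (n+1) = a (m+1) + 1"
        using m \<open>m\<ge>1\<close> a_even[of "m+1"] a_odd by (auto simp: algebra_simps)
      thus ?thesis using ih by auto
    qed
  qed
qed

lemma a_4m1: "m \<ge> 1 \<Longrightarrow> a (4*m+1) = a m + 1"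
proof -
  assume m: "m \<ge> 1"
  have "a (4*m+1) = max (a (2*m)) (a (2*m+1))" using a_odd[of "2*m"] m by (simp add: algebra_simps)
  also have "\<dots> = a m + 1" using a_even[OF m] a_odd[OF m] a_step[OF m] by auto
  finally show ?thesis .
qed

lemma a_4m3: "a (4*m+3) = a (m+1) + 1"
proof (cases "m = 0")
  case True
  have "a 3 = 1" using a_odd[of 1] by simp
  thus ?thesis using True by simp
next
  case False
  hence m: "m \<ge> 1" by simp
  have "a (4*m+3) = max (a (2*m+1)) (a (2*m+2))" using a_odd[of "2*m+1"] m
    by (simp add: algebra_simps numeral_eq_Suc)
  also have "a (2*m+2) = a (m+1) + 1" using a_even[of "m+1"] by (simp add: algebra_simps)
  also have "max (a (2*m+1)) (a (m+1) + 1) = a (m+1) + 1" using a_odd[OF m] a_step[OF m] by auto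
  finally show ?thesis .
qed

lemma a_4m1': "a (4*m+1) = a m + 1 - (if m = 0 then 1 else 0)"
  using a_4m1[of m] by (cases "m = 0") auto

lemma a_2n': "a (2*n) = a n + 1 - (if n = 0 then 1 else 0)"
  using a_even[of n] by (cases "n = 0") auto

lemma cases4:
  fixes n :: nat
  assumes "n \<ge> 2"
  obtains (ev) m where "n = 2*m" "m \<ge> 1" "m < n" | (o1) m where "n = 4*m+1" "m \<ge> 1" "m < n"
    | (o3) m where "n = 4*m+3" "m+1 < n"
proof -
  have "n mod 4 = 0 \<or> n mod 4 = 1 \<or> n mod 4 = 2 \<or> n mod 4 = 3" by auto
  thus ?thesis
  proof (elim disjE)
    assume h: "n mod 4 = 0"
    show ?thesis by (rule ev[of "n div 2"]) (use h assms in auto)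
  next
    assume h: "n mod 4 = 2"
    have "n mod 2 = 0" using h by presburger
    show ?thesis by (rule ev[of "n div 2"]) (use h assms \<open>n mod 2 = 0\<close> in auto)
  next
    assume h: "n mod 4 = 1"
    have "n = 4*(n div 4)+1" "n div 4 \<ge> 1" using h assms by presburger+
    thus ?thesis by (intro o1[of "n div 4"]) auto
  next
    assume h: "n mod 4 = 3"
    have "n = 4*(n div 4)+3" using h assms by presburger
    thus ?thesis by (intro o3[of "n div 4"]) auto
  qed
qed

lemma a_bounds: "n \<ge> 1 \<Longrightarrow> 2 ^ a n \<le> n \<and> n + 1 \<le> 2 * 4 ^ a n"
proof (induction n rule: less_induct)
  case (less n)
  show ?case
  proof (cases "n = 1")
    case True thus ?thesis by simp
  next
    case False
    hence "n \<ge> 2" using less.prems by simp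
    thus ?thesis
    proof (cases rule: cases4)
      case (ev m)
      with less.IH[of m] have ih: "2 ^ a m \<le> m \<and> m + 1 \<le> 2 * 4 ^ a m" by auto
      have "a n = a m + 1" using ev a_even by simp
      thus ?thesis using ih ev by auto
    next
      case (o1 m)
      with less.IH[of m] have ih: "2 ^ a m \<le> m \<and> m + 1 \<le> 2 * 4 ^ a m" by auto
      have "a n = a m + 1" using o1 a_4m1 by simp
      thus ?thesis using ih o1 by auto
    next
      case (o3 m)
      with less.IH[of "m+1"] have ih: "2 ^ a (m+1) \<le> m+1 \<and> m + 2 \<le> 2 * 4 ^ a (m+1)" by auto
      have "a n = a (m+1) + 1" using o3 a_4m3 by simp
      thus ?thesis using ih o3 by auto
    qed
  qed
qed


section \<open>2-regularity\<close>

definition bA :: "nat \<Rightarrow> rat" where "bA n = of_nat (a n)"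
definition bA1 :: "nat \<Rightarrow> rat" where "bA1 n = of_nat (a (n+1))"
definition bA2 :: "nat \<Rightarrow> rat" where "bA2 n = of_nat (a (2*n+1))"
definition bOne :: "nat \<Rightarrow> rat" where "bOne n = 1"
definition bD :: "nat \<Rightarrow> rat" where "bD n = (if n = 0 then 1 else 0)"

definition BB :: "(nat \<Rightarrow> rat) set" where "BB = {bA, bA1, bA2, bOne, bD}"
definition VV :: "(nat \<Rightarrow> rat) set" where "VV = {f. \<exists>c. f = (\<lambda>n. \<Sum>b\<in>BB. c b * b n)}"

lemma BB_fin: "finite BB" by (simp add: BB_def)

lemma VV_basis: "b \<in> BB \<Longrightarrow> b \<in> VV"
  unfolding VV_def
proof (intro CollectI exI[of _ "\<lambda>b'. if b' = b then 1 else 0"] ext)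
  fix n assume "b \<in> BB"
  have "(\<Sum>b'\<in>BB. (if b' = b then 1 else 0) * b' n) = (\<Sum>b'\<in>BB. if b' = b then b' n else 0)"
    by (intro sum.cong) auto
  also have "\<dots> = b n" using \<open>b \<in> BB\<close> BB_fin by (simp add: sum.delta')
  finally show "b n = (\<Sum>b'\<in>BB. (if b' = b then 1 else 0) * b' n)" by simp
qed

lemma VV_zero: "(\<lambda>n. 0) \<in> VV"
  unfolding VV_def by (intro CollectI exI[of _ "\<lambda>_. 0"]) simp

lemma VV_add: "f \<in> VV \<Longrightarrow> g \<in> VV \<Longrightarrow> (\<lambda>n. f n + g n) \<in> VV"
proof -
  assume "f \<in> VV" "g \<in> VV"
  then obtain c d where "f = (\<lambda>n. \<Sum>b\<in>BB. c b * b n)" "g = (\<lambda>n. \<Sum>b\<in>BB. d b * b n)"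
    unfolding VV_def by blast
  thus ?thesis unfolding VV_def
    by (intro CollectI exI[of _ "\<lambda>b. c b + d b"]) (simp add: sum.distrib algebra_simps)
qed

lemma VV_scale: "f \<in> VV \<Longrightarrow> (\<lambda>n. k * f n) \<in> VV"
proof -
  assume "f \<in> VV"
  then obtain c where "f = (\<lambda>n. \<Sum>b\<in>BB. c b * b n)" unfolding VV_def by blast
  thus ?thesis unfolding VV_def
    by (intro CollectI exI[of _ "\<lambda>b. k * c b"]) (simp add: sum_distrib_left algebra_simps)
qed

lemma VV_sum: assumes "\<And>b. b \<in> BB \<Longrightarrow> g b \<in> VV"
  shows "(\<lambda>n. \<Sum>b\<in>BB. c b * g b n) \<in> VV"
proof -
  have "finite S \<Longrightarrow> S \<subseteq> BB \<Longrightarrow> (\<lambda>n. \<Sum>b\<in>S. c b * g b n) \<in> VV" for S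
  proof (induction S rule: finite_induct)
    case empty thus ?case using VV_zero by simp
  next
    case (insert x F)
    hence "(\<lambda>n. \<Sum>b\<in>F. c b * g b n) \<in> VV" "(\<lambda>n. c x * g x n) \<in> VV"
      using assms VV_scale by auto
    from VV_add[OF this(2,1)] show ?case using insert by simp
  qed
  thus ?thesis using BB_fin by simp
qed

lemma dec_basis: "b \<in> BB \<Longrightarrow> (\<lambda>n. b (2*n)) \<in> VV \<and> (\<lambda>n. b (2*n+1)) \<in> VV"
proof -
  have A: "bA \<in> VV" "bA1 \<in> VV" "bA2 \<in> VV" "bOne \<in> VV" "bD \<in> VV" using VV_basis by (auto simp: BB_def)
  have e1: "(\<lambda>n. bA (2*n)) = (\<lambda>n. bA n + (bOne n + (-1) * bD n))"
  proof
    fix n show "bA (2*n) = bA n + (bOne n + (-1) * bD n)"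
      by (cases "n = 0") (auto simp: bA_def bOne_def bD_def a_even)
  qed
  have e2: "(\<lambda>n. bA (2*n+1)) = bA2" by (auto simp: bA_def bA2_def)
  have e3: "(\<lambda>n. bA1 (2*n)) = bA2" by (auto simp: bA1_def bA2_def)
  have e4: "(\<lambda>n. bA1 (2*n+1)) = (\<lambda>n. bA1 n + bOne n)"
  proof
    fix n show "bA1 (2*n+1) = bA1 n + bOne n"
      using a_even[of "n+1"] by (auto simp: bA1_def bOne_def algebra_simps)
  qed
  have e5: "(\<lambda>n. bA2 (2*n)) = (\<lambda>n. bA n + (bOne n + (-1) * bD n))"
  proof
    fix n show "bA2 (2*n) = bA n + (bOne n + (-1) * bD n)"
      using a_4m1[of n] by (cases "n = 0") (auto simp: bA_def bA2_def bOne_def bD_def algebra_simps)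
  qed
  have e6: "(\<lambda>n. bA2 (2*n+1)) = (\<lambda>n. bA1 n + bOne n)"
  proof
    fix n
    have "bA2 (2*n+1) = of_nat (a (4*n+3))" unfolding bA2_def
      by (rule arg_cong[where f="\<lambda>k. of_nat (a k)"]) simp
    thus "bA2 (2*n+1) = bA1 n + bOne n"
      using a_4m3[of n] by (simp add: bA1_def bOne_def)
  qed
  have e7: "(\<lambda>n. bOne (2*n)) = bOne" "(\<lambda>n. bOne (2*n+1)) = bOne" by (auto simp: bOne_def)
  have e8: "(\<lambda>n. bD (2*n)) = bD" "(\<lambda>n. bD (2*n+1)) = (\<lambda>n. 0)" by (auto simp: bD_def)
  have S1: "(\<lambda>n. bA n + (bOne n + (-1) * bD n)) \<in> VV"
    by (intro VV_add VV_scale A)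
  have S2: "(\<lambda>n. bA1 n + bOne n) \<in> VV" by (intro VV_add A)
  assume "b \<in> BB"
  thus ?thesis unfolding BB_def
    using e1 e2 e3 e4 e5 e6 e7 e8 S1 S2 A VV_zero by auto
qed

lemma dec_VV: "f \<in> VV \<Longrightarrow> (\<lambda>n. f (2*n+q)) \<in> VV" if "q \<le> 1"
proof -
  assume "f \<in> VV"
  then obtain c where f: "f = (\<lambda>n. \<Sum>b\<in>BB. c b * b n)" unfolding VV_def by blast
  have "(\<lambda>n. \<Sum>b\<in>BB. c b * (\<lambda>m. b (2*m+q)) n) \<in> VV"
    by (rule VV_sum) (use dec_basis that in \<open>cases q; auto\<close>)
  thus ?thesis using f by simp
qed

lemma kernel_VV: "r < 2^j \<Longrightarrow> (\<lambda>n. bA (2^j*n + r)) \<in> VV"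
proof (induction j arbitrary: r)
  case 0
  thus ?case using VV_basis[of bA] by (simp add: BB_def)
next
  case (Suc j)
  define r' where "r' = r mod 2^j"
  define q where "q = r div 2^j"
  have "r' < 2^j" unfolding r'_def by simp
  hence IH: "(\<lambda>n. bA (2^j*n + r')) \<in> VV" using Suc.IH by blast
  have q1: "q \<le> 1" using Suc.prems less_mult_imp_div_less[of r 2 "2^j"] unfolding q_def
    by simp
  have "r = 2^j * q + r'" unfolding q_def r'_def by simp
  hence eq: "(\<lambda>n. bA (2^Suc j*n + r)) = (\<lambda>n. (\<lambda>m. bA (2^j*m + r')) (2*n+q))"
    by (auto simp: algebra_simps)
  show ?case unfolding eq using dec_VV[OF q1 IH] .
qed

lemma part1: "k_regular_fps 2 E1"
proof -
  have nth: "fps_nth E1 = bA" by (auto simp: E1_def bA_def)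
  show ?thesis unfolding k_regular_fps_def k_regular_def nth
  proof (intro exI[of _ BB] conjI BB_fin ballI)
    fix f assume "f \<in> k_kernel 2 bA"
    then obtain j r where "r < 2^j" "f = (\<lambda>n. bA (2^j*n + r))" unfolding k_kernel_def by blast
    with kernel_VV show "\<exists>c. f = (\<lambda>n. \<Sum>b\<in>BB. c b * b n)" unfolding VV_def by blast
  qed
qed




lemma dom_main:
  fixes r :: "nat \<Rightarrow> real poly" and g :: "real \<Rightarrow> real"
  assumes i0: "i0 \<le> D" "poly (r i0) 0 \<noteq> 0"
    and mx: "\<And>i. i0 < i \<Longrightarrow> i \<le> D \<Longrightarrow> poly (r i) 0 = 0"
    and ev: "eventually (\<lambda>s. (\<Sum>i\<le>D. poly (r i) s * g s ^ i) = 0) (at_right 0)"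
    and ginf: "filterlim g at_top (at_right 0)"
    and small: "\<And>j. ((\<lambda>s. s * g s ^ j) \<longlongrightarrow> 0) (at_right 0)"
  shows False
proof -
  have gpos: "eventually (\<lambda>s. g s > 0) (at_right 0)"
    using ginf by (auto simp: filterlim_at_top_dense)
  define h where "h s = (\<Sum>i\<le>D. poly (r i) s * g s ^ i / g s ^ i0)" for s
  have h0: "eventually (\<lambda>s. h s = 0) (at_right 0)"
    using ev by (auto elim: eventually_mono simp: h_def sum_divide_distrib[symmetric])
  have id0: "((\<lambda>s::real. s) \<longlongrightarrow> 0) (at_right 0)" by (rule tendsto_ident_at)
  have trm: "((\<lambda>s. poly (r i) s * g s ^ i / g s ^ i0) \<longlongrightarrow> (if i = i0 then poly (r i0) 0 else 0)) (at_right 0)"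
    if "i \<le> D" for i
  proof (cases i i0 rule: linorder_cases)
    case less
    define k where "k = i0 - i"
    have k: "k > 0" "i0 = i + k" using less by (auto simp: k_def)
    have "eventually (\<lambda>s. poly (r i) s * g s ^ i / g s ^ i0 = poly (r i) s * inverse (g s ^ k)) (at_right 0)"
      using gpos by (auto elim!: eventually_mono simp: k power_add field_simps)
    moreover have "((\<lambda>s. poly (r i) s * inverse (g s ^ k)) \<longlongrightarrow> poly (r i) 0 * 0) (at_right 0)"
      by (intro tendsto_mult tendsto_poly id0 tendsto_inverse_0_at_top filterlim_pow_at_top k ginf)
    ultimately show ?thesis using less by (simp add: tendsto_cong)
  next
    case equal
    have "eventually (\<lambda>s. poly (r i) s * g s ^ i / g s ^ i0 = poly (r i) s) (at_right 0)"
      using gpos equal by (auto elim!: eventually_mono)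
    moreover have "((\<lambda>s. poly (r i) s) \<longlongrightarrow> poly (r i) 0) (at_right 0)"
      by (intro tendsto_poly id0)
    ultimately show ?thesis using equal by (simp add: tendsto_cong)
  next
    case greater
    define k where "k = i - i0"
    have k: "i = i0 + k" using greater by (auto simp: k_def)
    have "poly (r i) 0 = 0" using mx greater that by auto
    hence "[:0,1:] dvd r i" using poly_eq_0_iff_dvd[of "r i" 0] by simp
    then obtain v where v: "r i = [:0,1:] * v" by (auto elim: dvdE)
    have pv: "poly (r i) s = s * poly v s" for s using v by simp
    have alg: "s * p * G ^ (i0 + k) / G ^ i0 = p * (s * G ^ k)" if "G > 0" for s p G :: real
      using that by (simp add: power_add field_simps)
    have "eventually (\<lambda>s. poly (r i) s * g s ^ i / g s ^ i0 = poly v s * (s * g s ^ k)) (at_right 0)"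
      using gpos
    proof eventually_elim
      case (elim s)
      have "poly (r i) s * g s ^ i / g s ^ i0 = s * poly v s * g s ^ (i0 + k) / g s ^ i0"
        by (simp only: pv, simp only: k)
      also have "\<dots> = poly v s * (s * g s ^ k)" by (rule alg) (use elim in simp)
      finally show ?case .
    qed
    moreover have "((\<lambda>s. poly v s * (s * g s ^ k)) \<longlongrightarrow> poly v 0 * 0) (at_right 0)"
      by (intro tendsto_mult tendsto_poly id0 small)
    ultimately show ?thesis using greater by (simp add: tendsto_cong)
  qed
  have "(h \<longlongrightarrow> (\<Sum>i\<le>D. (if i = i0 then poly (r i0) 0 else 0))) (at_right 0)"
    unfolding h_def by (intro tendsto_sum trm) simp
  hence "(h \<longlongrightarrow> poly (r i0) 0) (at_right 0)" using i0 by simp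
  moreover have "(h \<longlongrightarrow> 0) (at_right 0)"
    using h0 by (simp add: tendsto_cong)
  ultimately have "poly (r i0) 0 = 0"
    using tendsto_unique[OF trivial_limit_at_right_real] by blast
  thus False using i0 by simp
qed

lemma dom:
  fixes r :: "nat \<Rightarrow> real poly" and g :: "real \<Rightarrow> real"
  assumes ginf: "filterlim g at_top (at_right 0)"
    and small: "\<And>j. ((\<lambda>s. s * g s ^ j) \<longlongrightarrow> 0) (at_right 0)"
  shows "(\<Sum>i\<le>D. degree (r i)) = N \<Longrightarrow> (\<exists>i\<le>D. r i \<noteq> 0) \<Longrightarrow>
    eventually (\<lambda>s. (\<Sum>i\<le>D. poly (r i) s * g s ^ i) = 0) (at_right 0) \<Longrightarrow> False"
proof (induction N arbitrary: r rule: less_induct)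
  case (less N r)
  show False
  proof (cases "\<exists>i\<le>D. poly (r i) 0 \<noteq> 0")
    case True
    define S where "S = {i. i \<le> D \<and> poly (r i) 0 \<noteq> 0}"
    have fin: "finite S" "S \<noteq> {}" using True by (auto simp: S_def)
    define i0 where "i0 = Max S"
    have "i0 \<in> S" using fin by (simp add: i0_def)
    moreover have "poly (r i) 0 = 0" if "i0 < i" "i \<le> D" for i
    proof (rule ccontr)
      assume "poly (r i) 0 \<noteq> 0"
      hence "i \<in> S" using that by (simp add: S_def)
      hence "i \<le> i0" using Max_ge[OF fin(1)] by (simp add: i0_def)
      thus False using that by simp
    qed
    ultimately show False
      using dom_main[of i0 D r g, OF _ _ _ less.prems(3) ginf small] by (auto simp: S_def)
  next
    case False
    define r' where "r' i = r i div [:0,1:]" for i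
    have rr: "r i = [:0,1:] * r' i" if "i \<le> D" for i
    proof -
      have "poly (r i) 0 = 0" using False that by auto
      hence "[:0,1:] dvd r i" using poly_eq_0_iff_dvd[of "r i" 0] by simp
      thus ?thesis unfolding r'_def by (metis dvd_mult_div_cancel)
    qed
    have nz: "\<exists>i\<le>D. r' i \<noteq> 0" using less.prems(2) rr by force
    have degle: "degree (r' i) \<le> degree (r i)" if "i \<le> D" for i
      using rr[OF that] by (cases "r' i = 0") (auto simp: degree_mult_eq)
    have deglt: "\<exists>i\<in>{..D}. degree (r' i) < degree (r i)"
    proof -
      obtain i where "i \<le> D" "r' i \<noteq> 0" using nz by blast
      thus ?thesis using rr[of i] by (intro bexI[of _ i]) (auto simp: degree_mult_eq)
    qed
    have lt: "(\<Sum>i\<le>D. degree (r' i)) < N"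
      using sum_strict_mono_ex1[of "{..D}" "\<lambda>i. degree (r' i)" "\<lambda>i. degree (r i)"] degle deglt less.prems(1)
      by auto
    have ev: "eventually (\<lambda>s. (\<Sum>i\<le>D. poly (r' i) s * g s ^ i) = 0) (at_right 0)"
      using less.prems(3) eventually_at_right_less[of "0::real"]
    proof eventually_elim
      case (elim s)
      have "(\<Sum>i\<le>D. poly (r i) s * g s ^ i) = s * (\<Sum>i\<le>D. poly (r' i) s * g s ^ i)"
        by (simp add: sum_distrib_left rr algebra_simps)
      thus ?case using elim by simp
    qed
    show False using less.IH[OF lt refl nz ev] .
  qed
qed




definition ff :: "real \<Rightarrow> real" where "ff x = (\<Sum>n. real (a n) * x ^ n)"
definition gg :: "real \<Rightarrow> real" where "gg s = s * ff (1 - s)"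

lemma sums2: assumes "0 \<le> x" "x < 1"
  shows "(\<lambda>n. (real n + 1) * x ^ n) sums (1 / (1 - x) ^ 2)"
proof -
  have s: "summable (\<lambda>k. norm (x ^ k))" using assms by (simp add: abs_mult power_abs)
  have "(\<lambda>k. \<Sum>i\<le>k. x ^ i * x ^ (k - i)) sums ((\<Sum>k. x ^ k) * (\<Sum>k. x ^ k))"
    by (rule Cauchy_product_sums[OF s s])
  moreover have "(\<lambda>k. \<Sum>i\<le>k. x ^ i * x ^ (k - i)) = (\<lambda>k. (real k + 1) * x ^ k)"
  proof
    fix k
    have "(\<Sum>i\<le>k. x ^ i * x ^ (k - i)) = (\<Sum>i\<le>k. x ^ k)"
      by (intro sum.cong refl) (simp add: power_add[symmetric])
    thus "(\<Sum>i\<le>k. x ^ i * x ^ (k - i)) = (real k + 1) * x ^ k" by simp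
  qed
  moreover have "(\<Sum>k. x ^ k) = 1 / (1 - x)" using assms by (simp add: suminf_geometric)
  ultimately show ?thesis by (simp add: power2_eq_square)
qed

lemma a_le_J: "real (a n) \<le> real J + (real n + 1) / 2 ^ J"
proof (cases "a n \<le> J")
  case True
  have "0 \<le> (real n + 1) / 2 ^ J" by simp
  thus ?thesis using True by linarith
next
  case False
  define k where "k = a n - J"
  have k: "a n = J + k" "k \<ge> 1" using False by (auto simp: k_def)
  hence n1: "n \<ge> 1" by (cases n) auto
  have "2 ^ a n \<le> n" using a_bounds[OF n1] by simp
  hence "(2::nat) ^ (J + k) \<le> n" using k by simp
  hence "real ((2::nat) ^ (J + k)) \<le> real n" by (simp only: of_nat_le_iff)
  hence "(2::real) ^ J * 2 ^ k \<le> real n" by (simp add: power_add)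
  hence "(2::real) ^ k \<le> real n / 2 ^ J" by (simp add: field_simps)
  moreover have "real k \<le> 2 ^ k"
  proof -
    have "real k < real ((2::nat) ^ k)" using less_exp[of k] by (simp only: of_nat_less_iff)
    thus ?thesis by simp
  qed
  moreover have "real n / 2 ^ J \<le> (real n + 1) / 2 ^ J" by (simp add: divide_right_mono)
  ultimately have "real k \<le> (real n + 1) / 2 ^ J" by linarith
  thus ?thesis using k by simp
qed

lemma ff_summable: assumes "0 \<le> x" "x < 1" shows "summable (\<lambda>n. real (a n) * x ^ n)"
proof (rule summable_comparison_test)
  show "\<exists>N. \<forall>n\<ge>N. norm (real (a n) * x ^ n) \<le> (real n + 1) * x ^ n"
    using a_le_J[of _ 0] assms by (intro exI[of _ 0]) (auto intro!: mult_right_mono)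
  show "summable (\<lambda>n. (real n + 1) * x ^ n)" using sums2[OF assms] by (rule sums_summable)
qed

lemma ff_nonneg: assumes "0 \<le> x" "x < 1" shows "ff x \<ge> 0"
  unfolding ff_def using assms ff_summable by (intro suminf_nonneg) auto

lemma ff_upper: assumes "0 \<le> x" "x < 1"
  shows "ff x \<le> real J / (1 - x) + 1 / (2 ^ J * (1 - x) ^ 2)"
proof -
  have "(\<lambda>n. real J * x ^ n + (1 / 2 ^ J) * ((real n + 1) * x ^ n)) sums
          (real J * (1 / (1 - x)) + (1 / 2 ^ J) * (1 / (1 - x) ^ 2))"
    using assms by (intro sums_add sums_mult sums2 geometric_sums) auto
  moreover have "ff x \<le> (\<Sum>n. real J * x ^ n + (1 / 2 ^ J) * ((real n + 1) * x ^ n))"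
    unfolding ff_def
  proof (rule suminf_le)
    show "summable (\<lambda>n. real (a n) * x ^ n)" by (rule ff_summable[OF assms])
    show "summable (\<lambda>n. real J * x ^ n + (1 / 2 ^ J) * ((real n + 1) * x ^ n))"
      using calculation by (rule sums_summable)
    fix n
    have "real (a n) * x ^ n \<le> (real J + (real n + 1) / 2 ^ J) * x ^ n"
      using a_le_J assms by (intro mult_right_mono) auto
    thus "real (a n) * x ^ n \<le> real J * x ^ n + (1 / 2 ^ J) * ((real n + 1) * x ^ n)"
      by (simp add: algebra_simps add_divide_distrib)
  qed
  ultimately show ?thesis by (simp add: sums_unique[symmetric] field_simps)
qed

lemma ff_lower: assumes "0 \<le> x" "x < 1" "M \<ge> 0" "\<And>n. n \<ge> N \<Longrightarrow> real (a n) \<ge> M"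
  shows "ff x \<ge> M / (1 - x) - M * real N"
proof -
  have fin: "(\<lambda>n. if n < N then M else 0) sums (\<Sum>n\<in>{..<N}. if n < N then M else 0)"
    by (rule sums_finite) auto
  have "(\<Sum>n\<in>{..<N}. if n < N then M else 0) = M * real N" by simp
  with fin have fin': "(\<lambda>n. if n < N then M else 0) sums (M * real N)" by (simp add: mult.commute)
  have S: "(\<lambda>n. M * x ^ n - (if n < N then M else 0)) sums (M * (1 / (1 - x)) - M * real N)"
    using assms by (intro sums_diff sums_mult geometric_sums fin') auto
  have "(\<Sum>n. M * x ^ n - (if n < N then M else 0)) \<le> ff x"
    unfolding ff_def
  proof (rule suminf_le)
    show "summable (\<lambda>n. real (a n) * x ^ n)" by (rule ff_summable[OF assms(1,2)])
    show "summable (\<lambda>n. M * x ^ n - (if n < N then M else 0))" using S by (rule sums_summable)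
    fix n
    show "M * x ^ n - (if n < N then M else 0) \<le> real (a n) * x ^ n"
    proof (cases "n < N")
      case True
      have "x ^ n \<le> 1" using assms by (simp add: power_le_one)
      hence "M * x ^ n \<le> M" using assms by (simp add: mult_left_le)
      moreover have "0 \<le> real (a n) * x ^ n" using assms by simp
      ultimately show ?thesis using True by simp
    next
      case False
      thus ?thesis using assms(4)[of n] assms by (auto intro!: mult_right_mono)
    qed
  qed
  thus ?thesis using sums_unique[OF S] by simp
qed

lemma a_large: "n \<ge> 2 * 4 ^ M \<Longrightarrow> a n \<ge> M"
proof (rule ccontr)
  assume n: "n \<ge> 2 * 4 ^ M" and "\<not> a n \<ge> M"
  hence "a n < M" by simp
  hence "(4::nat) ^ a n < 4 ^ M" by (intro power_strict_increasing) auto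
  moreover have "(1::nat) \<le> 4 ^ M" by simp
  hence "n \<ge> 1" using n by linarith
  hence "n + 1 \<le> 2 * 4 ^ a n" using a_bounds[of n] by simp
  ultimately show False using n by linarith
qed

lemma gg_inf: "filterlim gg at_top (at_right 0)"
  unfolding filterlim_at_top_dense
proof
  fix Z :: real
  define M where "M = max Z 0 + 1"
  define Mn where "Mn = nat \<lceil>M\<rceil>"
  define N :: nat where "N = 2 * 4 ^ Mn"
  have M0: "M \<ge> 0" "Z < M" by (auto simp: M_def)
  have aM: "real (a n) \<ge> M" if "n \<ge> N" for n
  proof -
    have "a n \<ge> Mn" using a_large that N_def by simp
    hence "real (a n) \<ge> real Mn" by simp
    moreover have "real Mn \<ge> M" unfolding Mn_def by linarith
    ultimately show ?thesis by simp
  qed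
  have "((\<lambda>s. M - M * real N * s) \<longlongrightarrow> M - M * real N * 0) (at_right 0)"
    by (intro tendsto_intros)
  hence "eventually (\<lambda>s. Z < M - M * real N * s) (at_right 0)"
    using M0 by (intro order_tendstoD(1)) auto
  moreover have "eventually (\<lambda>s::real. 0 < s \<and> s < 1) (at_right 0)"
    unfolding eventually_at_right_field by (intro exI[of _ 1]) auto
  ultimately show "eventually (\<lambda>s. Z < gg s) (at_right 0)"
  proof eventually_elim
    case (elim s)
    have "ff (1 - s) \<ge> M / (1 - (1 - s)) - M * real N"
      using elim M0 aM by (intro ff_lower) auto
    hence "s * ff (1 - s) \<ge> s * (M / s - M * real N)" using elim by (intro mult_left_mono) auto
    also have "s * (M / s - M * real N) = M - M * real N * s" using elim by (simp add: field_simps)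
    finally show ?case using elim by (simp add: gg_def)
  qed
qed

lemma gg_upper: assumes "0 < s" "s < 1" shows "gg s \<le> log 2 (1 / s) + 2" "gg s \<ge> 0"
proof -
  define J where "J = nat \<lceil>log 2 (1 / s)\<rceil>"
  have lg: "log 2 (1 / s) \<ge> 0" using assms by simp
  have J1: "real J \<ge> log 2 (1 / s)" "real J \<le> log 2 (1 / s) + 1" unfolding J_def using lg by linarith+
  have "(2::real) ^ J = 2 powr real J" by (simp add: powr_realpow)
  also have "\<dots> \<ge> 2 powr log 2 (1 / s)" using J1 by (intro powr_mono) auto
  also have "2 powr log 2 (1 / s) = 1 / s" using assms by simp
  finally have J2: "(2::real) ^ J \<ge> 1 / s" .
  have "ff (1 - s) \<le> real J / (1 - (1 - s)) + 1 / (2 ^ J * (1 - (1 - s)) ^ 2)"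
    using assms by (intro ff_upper) auto
  hence "gg s \<le> s * (real J / s + 1 / (2 ^ J * s ^ 2))" unfolding gg_def using assms
    by (intro mult_left_mono) auto
  also have "\<dots> = real J + 1 / (2 ^ J * s)" using assms by (simp add: field_simps power2_eq_square)
  also have "1 / (2 ^ J * s) \<le> 1"
  proof -
    have "2 ^ J * s \<ge> 1" using J2 assms by (simp add: field_simps)
    thus ?thesis by simp
  qed
  finally show "gg s \<le> log 2 (1 / s) + 2" using J1 by linarith
  show "gg s \<ge> 0" unfolding gg_def using assms ff_nonneg[of "1 - s"] by simp
qed

lemma gg_small: "((\<lambda>s. s * gg s ^ j) \<longlongrightarrow> 0) (at_right 0)"
proof (rule tendsto_sandwich[of "\<lambda>_. 0" _ _ "\<lambda>s. s * (log 2 (1 / s) + 2) ^ j"])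
  have ev: "eventually (\<lambda>s::real. 0 < s \<and> s < 1) (at_right 0)"
    unfolding eventually_at_right_field by (intro exI[of _ 1]) auto
  show "eventually (\<lambda>s. 0 \<le> s * gg s ^ j) (at_right 0)"
    using ev by eventually_elim (use gg_upper in auto)
  show "eventually (\<lambda>s. s * gg s ^ j \<le> s * (log 2 (1 / s) + 2) ^ j) (at_right 0)"
    using ev by eventually_elim (use gg_upper in \<open>auto intro!: mult_left_mono power_mono\<close>)
  show "((\<lambda>_. 0) \<longlongrightarrow> (0::real)) (at_right 0)" by simp
  show "((\<lambda>s. s * (log 2 (1 / s) + 2) ^ j) \<longlongrightarrow> 0) (at_right 0)"
    by real_asymp
qed




definition Rm :: "rat fps \<Rightarrow> real fps" where "Rm f = Abs_fps (\<lambda>n. of_rat (fps_nth f n))"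

lemma Rm_nth[simp]: "fps_nth (Rm f) n = of_rat (fps_nth f n)" by (simp add: Rm_def)
lemma Rm_0[simp]: "Rm 0 = 0" by (rule fps_ext) simp
lemma Rm_1[simp]: "Rm 1 = 1" by (rule fps_ext) simp
lemma Rm_add[simp]: "Rm (f + g) = Rm f + Rm g" by (rule fps_ext) (simp add: of_rat_add)
lemma Rm_mult[simp]: "Rm (f * g) = Rm f * Rm g"
  by (rule fps_ext) (simp add: fps_mult_nth of_rat_sum of_rat_mult)
lemma Rm_pow[simp]: "Rm (f ^ n) = Rm f ^ n" by (induction n) simp_all
lemma Rm_sum: "finite I \<Longrightarrow> Rm (\<Sum>i\<in>I. F i) = (\<Sum>i\<in>I. Rm (F i))"
  by (induction I rule: finite_induct) simp_all
lemma Rm_fop[simp]: "Rm (fps_of_poly p) = fps_of_poly (map_poly of_rat p)"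
  by (rule fps_ext) (simp add: coeff_map_poly)

definition E1r :: "real fps" where "E1r = Abs_fps (\<lambda>n. real (a n))"

lemma Rm_E1: "Rm E1 = E1r"
  by (rule fps_ext) (simp add: E1_def E1r_def)

lemma eval_E1r: "eval_fps E1r x = ff x"
  by (simp add: eval_fps_def ff_def E1r_def)

lemma rad_E1r: "fps_conv_radius E1r \<ge> 1"
  unfolding fps_conv_radius_def
proof (rule conv_radius_geI_ex')
  fix r :: real assume "0 < r" "ereal r < 1"
  thus "summable (\<lambda>n. fps_nth E1r n * of_real r ^ n)"
    using ff_summable[of r] by (simp add: E1r_def)
qed

lemma eval_fps_sum:
  fixes F :: "nat \<Rightarrow> real fps"
  assumes "finite I" "\<And>i. i \<in> I \<Longrightarrow> ereal (norm z) < fps_conv_radius (F i)"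
  shows "eval_fps (\<Sum>i\<in>I. F i) z = (\<Sum>i\<in>I. eval_fps (F i) z) \<and> ereal (norm z) < fps_conv_radius (\<Sum>i\<in>I. F i)"
  using assms
proof (induction I rule: finite_induct)
  case empty thus ?case by simp
next
  case (insert x F')
  hence IH: "eval_fps (\<Sum>i\<in>F'. F i) z = (\<Sum>i\<in>F'. eval_fps (F i) z)"
    "ereal (norm z) < fps_conv_radius (\<Sum>i\<in>F'. F i)" and hx: "ereal (norm z) < fps_conv_radius (F x)"
    by auto
  have "ereal (norm z) < min (fps_conv_radius (F x)) (fps_conv_radius (\<Sum>i\<in>F'. F i))"
    using IH hx by simp
  also have "\<dots> \<le> fps_conv_radius (F x + (\<Sum>i\<in>F'. F i))" by (rule fps_conv_radius_add)
  finally have r: "ereal (norm z) < fps_conv_radius (F x + (\<Sum>i\<in>F'. F i))" .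
  show ?case using insert IH hx r by (simp add: eval_fps_add)
qed

lemma poly_fps_sum:
  "poly (map_poly fps_of_poly P) F = (\<Sum>i\<le>degree P. fps_of_poly (coeff P i) * F ^ i)"
proof -
  have d: "degree (map_poly fps_of_poly P) = degree P"
    by (rule degree_map_poly) simp
  show ?thesis unfolding poly_altdef d by (simp add: coeff_map_poly)
qed

lemma part2: "\<not> fps_algebraic_ratfun E1"
proof
  assume "fps_algebraic_ratfun E1"
  then obtain P where P: "P \<noteq> 0" "poly (map_poly fps_of_poly P) E1 = 0"
    unfolding fps_algebraic_ratfun_def by blast
  define D where "D = degree P"
  define q where "q i = map_poly (of_rat :: rat \<Rightarrow> real) (coeff P i)" for i
  have eqR: "(\<Sum>i\<le>D. fps_of_poly (q i) * E1r ^ i) = 0"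
  proof -
    have "Rm (poly (map_poly fps_of_poly P) E1) = 0" using P by simp
    thus ?thesis unfolding poly_fps_sum Rm_sum[OF finite_atMost] by (simp add: Rm_E1 q_def D_def)
  qed
  have rad: "ereal (norm x) < fps_conv_radius (fps_of_poly (q i) * E1r ^ i)" if "\<bar>x\<bar> < 1" for x :: real and i
  proof -
    have "ereal (norm x) < 1" using that by simp
    also have "1 \<le> fps_conv_radius E1r" by (rule rad_E1r)
    also have "\<dots> \<le> fps_conv_radius (E1r ^ i)" by (rule fps_conv_radius_power)
    also have "\<dots> = min (fps_conv_radius (fps_of_poly (q i))) (fps_conv_radius (E1r ^ i))" by simp
    also have "\<dots> \<le> fps_conv_radius (fps_of_poly (q i) * E1r ^ i)" by (rule fps_conv_radius_mult)
    finally show ?thesis .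
  qed
  have eq0: "(\<Sum>i\<le>D. poly (q i) x * ff x ^ i) = 0" if "0 < x" "x < 1" for x
  proof -
    have ax: "\<bar>x\<bar> < 1" using that by simp
    have rE: "ereal (norm x) < fps_conv_radius E1r"
    proof -
      have "ereal (norm x) < 1" using ax by simp
      also have "1 \<le> fps_conv_radius E1r" by (rule rad_E1r)
      finally show ?thesis .
    qed
    have "0 = eval_fps (\<Sum>i\<le>D. fps_of_poly (q i) * E1r ^ i) x" using eqR by simp
    also have "\<dots> = (\<Sum>i\<le>D. eval_fps (fps_of_poly (q i) * E1r ^ i) x)"
      using eval_fps_sum[of "{..D}" x "\<lambda>i. fps_of_poly (q i) * E1r ^ i"] rad[OF ax] by simp
    also have "\<dots> = (\<Sum>i\<le>D. poly (q i) x * ff x ^ i)"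
    proof (intro sum.cong refl)
      fix i
      have "ereal (norm x) < fps_conv_radius (E1r ^ i)"
        using rE fps_conv_radius_power[of E1r i] by (meson less_le_trans)
      thus "eval_fps (fps_of_poly (q i) * E1r ^ i) x = poly (q i) x * ff x ^ i"
        using rE by (simp add: eval_fps_mult eval_fps_power eval_E1r)
    qed
    finally show ?thesis by simp
  qed
  define r where "r i = pcompose (q i) [:1, -1:] * monom 1 (D - i)" for i
  have ev: "eventually (\<lambda>s. (\<Sum>i\<le>D. poly (r i) s * gg s ^ i) = 0) (at_right 0)"
  proof -
    have "eventually (\<lambda>s::real. 0 < s \<and> s < 1) (at_right 0)"
      unfolding eventually_at_right_field by (intro exI[of _ 1]) auto
    thus ?thesis
    proof eventually_elim
      case (elim s)
      have "(\<Sum>i\<le>D. poly (r i) s * gg s ^ i) = (\<Sum>i\<le>D. s ^ D * (poly (q i) (1 - s) * ff (1 - s) ^ i))"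
      proof (intro sum.cong refl)
        fix i assume "i \<in> {..D}"
        hence "s ^ (D - i) * s ^ i = s ^ D" by (simp add: power_add[symmetric])
        thus "poly (r i) s * gg s ^ i = s ^ D * (poly (q i) (1 - s) * ff (1 - s) ^ i)"
          by (simp add: r_def gg_def poly_pcompose poly_monom power_mult_distrib algebra_simps)
      qed
      also have "\<dots> = s ^ D * (\<Sum>i\<le>D. poly (q i) (1 - s) * ff (1 - s) ^ i)"
        by (simp add: sum_distrib_left)
      also have "\<dots> = 0" using eq0[of "1 - s"] elim by simp
      finally show ?case .
    qed
  qed
  have nz: "\<exists>i\<le>D. r i \<noteq> 0"
  proof (intro exI[of _ D] conjI)
    have "coeff P D \<noteq> 0" using P(1) by (simp add: D_def)
    hence "q D \<noteq> 0" unfolding q_def by (subst map_poly_eq_0_iff) auto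
    hence "pcompose (q D) [:1, -1:] \<noteq> 0" by (subst pcompose_eq_0_iff) auto
    thus "r D \<noteq> 0" by (simp add: r_def)
  qed simp
  show False using dom[OF gg_inf gg_small refl nz ev] .
qed



theorem mainTheorem18:
  shows "k_regular_fps 2 E1 \<and> \<not> fps_algebraic_ratfun E1"
  using part1 part2 by blast

end
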